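(* Let $n$ be odd and $k\ge 4$ even with $2k\le n$ and $n\equiv \pm 2 \pmod{k-1}$, and put $s=\frac{(n-4)(k-2)}{2(k-1)}$. Then there is a map $\sigma:\mathbb{Z}_n\to\mathbb{Z}_n$ such that for every edge $x_ix_j$ of $\mathrm{Pb}(n,k)$, the circular distance between $\sigma(i)$ and $\sigma(j)$ in $\mathbb{Z}_n$ is at least $s$; i.e., $\sigma$ is a homomorphism $\mathrm{Pb}(n,k)\to K_{n/s}$.
   Context: $\mathrm{Pb}(n,k)$ is the graph with vertex set $\{x_0,\dots,x_{n-1}\}$ (indices in $\mathbb{Z}_n$) in which $x_i$ is adjacent to $x_{i\pm1}$ and to $x_{i\pm k}$ (it is obtained from the generalized Petersen graph $\mathrm{Pet}(n,k)$ by identifying $u_i$ with $v_i$ for each $i$). For a real $s$ with $0<s\le n/2$, $K_{n/s}$ denotes the graph on $\mathbb{Z}_n=\{0,\dots,n-1\}$ in which $i\sim j$ iff $s\le |i-j|\le n-s$ (equivalently, the circular distance $\min(|i-j|,n-|i-j|)$ is at least $s$). *)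

theory Defs
  imports Main "HOL-Number_Theory.Cong" Complex_Main
begin

definition Pb_edge :: "nat \<Rightarrow> nat \<Rightarrow> nat \<Rightarrow> nat \<Rightarrow> bool" where
  "Pb_edge n k i j \<longleftrightarrow> i < n \<and> j < n \<and>
     ([int j = int i + 1] (mod int n) \<or> [int j = int i - 1] (mod int n) \<or>
      [int j = int i + int k] (mod int n) \<or> [int j = int i - int k] (mod int n))"

definition circ_dist :: "nat \<Rightarrow> nat \<Rightarrow> nat \<Rightarrow> nat" where
  "circ_dist n a b = min (if a \<le> b then b - a else a - b) (n - (if a \<le> b then b - a else a - b))"

definition K_circ_edge :: "nat \<Rightarrow> real \<Rightarrow> nat \<Rightarrow> nat \<Rightarrow> bool" where
  "K_circ_edge n s a b \<longleftrightarrow> a < n \<and> b < n \<and> s \<le> real (circ_dist n a b)"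

end

theory Submission
  imports Defs
begin

definition Dd :: "int \<Rightarrow> int \<Rightarrow> int" where
  "Dd m x = min (x mod m) (m - x mod m)"

lemma circ_dist_Dd:
  assumes "a < n" "b < n"
  shows "int (circ_dist n a b) = Dd (int n) (int b - int a)"
proof (cases "a \<le> b")
  case True
  then have "(int b - int a) mod int n = int b - int a" using assms by (simp add: mod_pos_pos_trivial)
  then show ?thesis using True assms by (simp add: circ_dist_def Dd_def of_nat_diff)
next
  case False
  have "(int b - int a) mod int n = int b - int a + int n" using assms False
  proof -
    have "(int b - int a) mod int n = (int b - int a + int n) mod int n" by simp
    also have "\<dots> = int b - int a + int n" using assms False by (intro mod_pos_pos_trivial) auto
    finally show ?thesis .
  qed
  then show ?thesis using False assms by (simp add: circ_dist_def Dd_def of_nat_diff)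
qed

lemma diff_mod_helper: fixes a b d m :: int
  assumes "a mod m = (b + d) mod m" shows "(a - b) mod m = d mod m"
  by (metis assms mod_diff_left_eq add_diff_cancel_left')

lemma Dd_neg: assumes "m > 0" shows "Dd m (- x) = Dd m x"
  using assms by (auto simp: Dd_def zmod_zminus1_eq_if)

lemma Dd_cong: assumes "x mod m = y mod m" shows "Dd m x = Dd m y"
  using assms by (simp add: Dd_def)

lemma Dd_small: assumes "0 \<le> x" "2 * x \<le> m" "m > 0" shows "Dd m x = x"
proof -
  have "x < m \<or> x = 0" using assms by linarith
  then show ?thesis using assms by (auto simp: Dd_def mod_pos_pos_trivial)
qed

theorem theorem5:
  fixes n k :: nat
  assumes "odd n" and "even k" and "k \<ge> 4" and "2 * k \<le> n"
    and "[int n = 2] (mod int (k - 1)) \<or> [int n = - 2] (mod int (k - 1))"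
  shows "\<exists>\<sigma> :: nat \<Rightarrow> nat. (\<forall>i<n. \<sigma> i < n) \<and>
           (\<forall>i j. Pb_edge n k i j \<longrightarrow>
              K_circ_edge n ((real n - 4) * (real k - 2) / (2 * (real k - 1))) (\<sigma> i) (\<sigma> j))"
proof -
  define N where "N = int n"
  define K where "K = int k"
  have Npos: "N > 0" using assms(3,4) by (simp add: N_def)
  have k1: "int (k - 1) = K - 1" using assms(3) by (simp add: K_def of_nat_diff)
  obtain e q where e: "e = 1 \<or> e = -1" and nq: "N = q * (K - 1) + 2 * e"
  proof -
    from assms(5) show ?thesis
    proof
      assume "[int n = 2] (mod int (k - 1))"
      then have "(K - 1) dvd (N - 2)" unfolding k1 by (simp add: cong_iff_dvd_diff N_def)
      then obtain q where "N - 2 = (K - 1) * q" by (auto elim: dvdE)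
      then show ?thesis using that[of 1 q] by (simp add: algebra_simps)
    next
      assume "[int n = - 2] (mod int (k - 1))"
      then have "(K - 1) dvd (N + 2)" unfolding k1 by (simp add: cong_iff_dvd_diff N_def)
      then obtain q where "N + 2 = (K - 1) * q" by (auto elim: dvdE)
      then show ?thesis using that[of "-1" q] by (simp add: algebra_simps)
    qed
  qed
  obtain t where t: "K = 2 * t" using assms(2) by (auto simp: K_def elim: evenE)
  have K4: "K \<ge> 4" using assms(3) by (simp add: K_def)
  have NK: "N \<ge> 2 * K" using assms(4) by (simp add: N_def K_def)
  have Nodd: "odd N" using assms(1) by (simp add: N_def)
  have qodd: "odd q"
  proof
    assume "even q"
    then have "even (q * (K - 1) + 2 * e)" by simp
    with Nodd nq show False by simp
  qed
  have q2: "q \<ge> 2"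
  proof (rule ccontr)
    assume "\<not> q \<ge> 2"
    then have "q \<le> 1" by simp
    then have "q * (K - 1) \<le> K - 1" using K4 mult_right_mono[of q 1 "K - 1"] by simp
    then show False using nq NK e K4 by linarith
  qed
  have "even (N - q)" using Nodd qodd by simp
  then obtain c where c: "N - q = 2 * c" by (rule evenE)
  have ck: "c * K = c + e + N * (t - 1)"
  proof -
    have "2 * (c * K) = (N - q) * K" using c by simp
    also have "\<dots> = 2 * (c + e + N * (t - 1))"
      using nq c t by (simp add: algebra_simps)
    finally show ?thesis by simp
  qed
  have c0: "0 \<le> c" "2 * c \<le> N" "0 \<le> c + e" "2 * (c + e) \<le> N"
  proof -
    have "q * 3 \<le> q * (K - 1)" using q2 K4 by (intro mult_left_mono) auto
    then show "0 \<le> c" "2 * c \<le> N" "0 \<le> c + e" "2 * (c + e) \<le> N"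
      using c q2 e Npos K4 nq by (smt (verit))+
  qed
  define \<sigma> where "\<sigma> i = nat ((c * int i) mod N)" for i
  have sig: "int (\<sigma> i) = (c * int i) mod N" for i
    using Npos by (simp add: \<sigma>_def)
  have sigl: "\<sigma> i < n" for i
  proof -
    have "(c * int i) mod N < N" using Npos by simp
    then show ?thesis using sig[of i] by (simp add: N_def)
  qed
  have DdK: "Dd N (c * K) = c + e"
  proof -
    have "(c * K) mod N = (c + e) mod N" unfolding ck by (rule mod_mult_self2)
    then show ?thesis using Dd_cong Dd_small c0 Npos by metis
  qed
  have Ddc: "Dd N c = c" using Dd_small c0 Npos by metis
  have key: "Dd N (int (\<sigma> j) - int (\<sigma> i)) \<in> {c, c + e}" if "Pb_edge n k i j" for i j
  proof -
    have cases: "\<exists>d\<in>{1, -1, K, -K}. (int j - int i) mod N = d mod N"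
    proof -
      have "[int j = int i + 1] (mod N) \<or> [int j = int i + (-1)] (mod N) \<or>
            [int j = int i + K] (mod N) \<or> [int j = int i + (-K)] (mod N)"
        using that unfolding Pb_edge_def N_def K_def by simp
      then show ?thesis unfolding cong_def using diff_mod_helper by blast
    qed
    then obtain d where d: "d \<in> {1, -1, K, -K}" "(int j - int i) mod N = d mod N" by blast
    have "(int (\<sigma> j) - int (\<sigma> i)) mod N = (c * (int j - int i)) mod N"
      unfolding sig by (simp add: mod_diff_eq right_diff_distrib)
    also have "\<dots> = (c * d) mod N" using d(2) by (metis mod_mult_right_eq)
    finally have "Dd N (int (\<sigma> j) - int (\<sigma> i)) = Dd N (c * d)" by (rule Dd_cong)
    then show ?thesis using d(1) Dd_neg[OF Npos] DdK Ddc by auto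
  qed
  have bound: "(real n - 4) * (real k - 2) / (2 * (real k - 1)) \<le> real_of_int x"
    if "x \<in> {c, c + e}" for x
  proof -
    have rk: "real k = real_of_int K" and rn: "real n = real_of_int N" by (simp_all add: K_def N_def)
    have "(real n - 4) * (real k - 2) \<le> real_of_int x * (2 * (real k - 1))"
    proof -
      have "of_int ((N - 4) * (K - 2)) \<le> (of_int (x * (2 * (K - 1))) :: real)"
      proof -
        have "(N - 4) * (K - 2) \<le> x * (2 * (K - 1))"
          using that e
        proof (elim disjE insertE)
          assume "x = c" "e = 1"
          then show ?thesis using c nq K4 by (simp add: algebra_simps)
        qed (use c nq K4 in \<open>auto simp: algebra_simps\<close>)
        then show ?thesis by linarith
      qed
      then show ?thesis unfolding rk rn by simp
    qed
    then show ?thesis using assms(3) by (simp add: divide_simps)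
  qed
  show ?thesis
  proof (intro exI[of _ \<sigma>] conjI allI impI)
    show "\<sigma> i < n" for i using sigl by simp
    fix i j assume E: "Pb_edge n k i j"
    have ij: "i < n" "j < n" using E by (simp_all add: Pb_edge_def)
    have "int (circ_dist n (\<sigma> i) (\<sigma> j)) = Dd N (int (\<sigma> j) - int (\<sigma> i))"
      unfolding N_def by (rule circ_dist_Dd; simp add: sigl)
    then have "real (circ_dist n (\<sigma> i) (\<sigma> j)) = real_of_int (Dd N (int (\<sigma> j) - int (\<sigma> i)))"
      by (metis of_int_of_nat_eq)
    then show "K_circ_edge n ((real n - 4) * (real k - 2) / (2 * (real k - 1))) (\<sigma> i) (\<sigma> j)"
      unfolding K_circ_edge_def using sigl bound key[OF E] by simp
  qed
qed

end
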